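(* Let $G$ be a $\sigma$-finite abelian group and fix an exhausting sequence $(G_n)_{n\geq 1}$ of $G$. Let $A\subset G$ and $B\subset G$ satisfy at least one of the following three hypotheses: \begin{enumerate} \item $\underline{\mathrm{d}}(A+B)< \underline{\mathrm{d}}(A)+\underline{\mathrm{d}}(B)$; \item $\overline{\mathrm{d}}(A+B)< \overline{\mathrm{d}}(A)+\overline{\mathrm{d}}(B)$, and $A=B$ or $A=-B$; \item $\overline{\mathrm{d}}(A+B)< \overline{\mathrm{d}}(A)+\underline{\mathrm{d}}(B)$. \end{enumerate} Then the subgroup $H=\mathrm{Stab}(A+B)$ has finite index $q=[G:H]$ in $G$, and $H$ admits a density, with $\mathrm{d}(H)=q^{-1}$. Moreover, if $a,b,c$ denote the numbers of cosets of $H$ in $G$ that meet $A$, $B$, $A+B$ respectively, then $c=a+b-1$.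
   Context: A group $G$ is $\sigma$-finite if it is infinite and admits an exhausting sequence, i.e. a non-decreasing sequence $(G_n)_{n\ge1}$ of finite subgroups with $G=\bigcup_{n\ge1}G_n$. For $A\subset G$ (with respect to the fixed exhausting sequence) the lower and upper asymptotic densities are $\underline{\mathrm{d}}(A)=\liminf_{n\to\infty}\frac{|A\cap G_n|}{|G_n|}$ and $\overline{\mathrm{d}}(A)=\limsup_{n\to\infty}\frac{|A\cap G_n|}{|G_n|}$; if they coincide, $A$ is said to admit a density, and the common value is denoted $\mathrm{d}(A)$. For $X\subset G$, $\mathrm{Stab}(X)=\{g\in G: g+x\in X \text{ for all } x\in X\}$ is the stabilizer (period) of $X$. $A+B=\{a+b: a\in A, b\in B\}$ and $-B=\{-b: b\in B\}$. *)

theory Defs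
  imports Complex_Main "HOL-Library.Extended_Real"
begin

definition is_subgroup :: "'a::ab_group_add set \<Rightarrow> bool" where
  "is_subgroup H \<longleftrightarrow> 0 \<in> H \<and> (\<forall>x\<in>H. \<forall>y\<in>H. x - y \<in> H)"

text \<open>Exhausting sequence of a sigma-finite abelian group (indexed from 0 instead of 1).\<close>
definition exhausting_seq :: "(nat \<Rightarrow> 'a::ab_group_add set) \<Rightarrow> bool" where
  "exhausting_seq Gs \<longleftrightarrow> (\<forall>n. finite (Gs n) \<and> is_subgroup (Gs n)) \<and> mono Gs
     \<and> (\<Union>n. Gs n) = UNIV"

definition sigma_finite_group :: "'a::ab_group_add itself \<Rightarrow> bool" where
  "sigma_finite_group _ \<longleftrightarrow> infinite (UNIV :: 'a set) \<and> (\<exists>Gs::nat \<Rightarrow> 'a set. exhausting_seq Gs)"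

definition ratio :: "(nat \<Rightarrow> 'a set) \<Rightarrow> 'a set \<Rightarrow> nat \<Rightarrow> ereal" where
  "ratio Gs A n = ereal (real (card (A \<inter> Gs n)) / real (card (Gs n)))"

definition lower_density :: "(nat \<Rightarrow> 'a set) \<Rightarrow> 'a set \<Rightarrow> ereal" where
  "lower_density Gs A = liminf (ratio Gs A)"

definition upper_density :: "(nat \<Rightarrow> 'a set) \<Rightarrow> 'a set \<Rightarrow> ereal" where
  "upper_density Gs A = limsup (ratio Gs A)"

definition sumset :: "'a::ab_group_add set \<Rightarrow> 'a set \<Rightarrow> 'a set" where
  "sumset A B = {a + b | a b. a \<in> A \<and> b \<in> B}"

definition Stab :: "'a::ab_group_add set \<Rightarrow> 'a set" where
  "Stab X = {g. \<forall>x\<in>X. g + x \<in> X}"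

definition cosets :: "'a::ab_group_add set \<Rightarrow> 'a set set" where
  "cosets H = (\<lambda>g. (\<lambda>h. g + h) ` H) ` UNIV"

definition cosets_meeting :: "'a::ab_group_add set \<Rightarrow> 'a set \<Rightarrow> nat" where
  "cosets_meeting H X = card {C \<in> cosets H. C \<inter> X \<noteq> {}}"

end

theory Submission
  imports Defs "HOL-Analysis.Extended_Real_Limits"
begin


lemma Stab_finite_image:
  assumes "finite X" "g \<in> Stab X"
  shows "(\<lambda>x. g + x) ` X = X"
proof -
  have sub: "(\<lambda>x. g + x) ` X \<subseteq> X" using assms(2) by (auto simp: Stab_def)
  have "card ((\<lambda>x. g + x) ` X) = card X" by (rule card_image) (auto simp: inj_on_def)
  then show ?thesis using sub assms(1) by (metis card_subset_eq)
qed

lemma Stab_uminus: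
  assumes "finite X" "g \<in> Stab X"
  shows "- g \<in> Stab X"
proof -
  have e: "(\<lambda>x. g + x) ` X = X" by (rule Stab_finite_image[OF assms])
  show ?thesis unfolding Stab_def
  proof safe
    fix x assume "x \<in> X"
    then obtain y where "y \<in> X" "x = g + y" using e by blast
    then show "- g + x \<in> X" by simp
  qed
qed

lemma Stab_add: "g \<in> Stab X \<Longrightarrow> h \<in> Stab X \<Longrightarrow> g + h \<in> Stab X"
  unfolding Stab_def by (simp add: add.assoc)

lemma Stab_zero: "0 \<in> Stab X" unfolding Stab_def by simp

lemma Stab_diff:
  assumes "finite X" "g \<in> Stab X" "h \<in> Stab X"
  shows "g - h \<in> Stab X"
  using Stab_add[OF assms(2) Stab_uminus[OF assms(1,3)]] by simp

lemma Stab_finite: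
  assumes "finite X" "X \<noteq> {}"
  shows "finite (Stab X)"
proof -
  obtain x0 where x0: "x0 \<in> X" using assms by auto
  have "Stab X \<subseteq> (\<lambda>x. x - x0) ` X"
  proof
    fix g assume "g \<in> Stab X"
    then have "g + x0 \<in> X" using x0 by (auto simp: Stab_def)
    then show "g \<in> (\<lambda>x. x - x0) ` X" by (auto intro!: image_eqI[of _ _ "g + x0"])
  qed
  then show ?thesis using assms(1) finite_surj by blast
qed

lemma Stab_mem:
  "g \<in> Stab X \<Longrightarrow> x \<in> X \<Longrightarrow> g + x \<in> X" unfolding Stab_def by auto

lemma card_translate: "card ((\<lambda>x. c + x) ` S) = card (S :: 'a::ab_group_add set)"
  by (rule card_image) (auto simp: inj_on_def)

lemma card_translate': "card ((\<lambda>x. x + c) ` S) = card (S :: 'a::ab_group_add set)"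
  by (rule card_image) (auto simp: inj_on_def)

lemma sum_bound:
  fixes P Q H1 H2 :: "'a::ab_group_add set"
  assumes "finite P" "finite Q" "p0 \<in> P" "q0 \<in> Q"
    and "\<forall>p\<in>P. p - p0 \<in> H1" "\<forall>q\<in>Q. q - q0 \<in> H2" "finite (H1 \<inter> H2)"
  shows "card P + card Q \<le> card (sumset P Q) + card (H1 \<inter> H2)"
proof -
  let ?U = "(\<lambda>q. p0 + q) ` Q" and ?V = "(\<lambda>p. p + q0) ` P"
  have fin: "finite ?U" "finite ?V" using assms by auto
  have "?U \<union> ?V \<subseteq> sumset P Q" using assms(3,4) by (auto simp: sumset_def)
  moreover have "finite (sumset P Q)"
  proof -
    have "sumset P Q = (\<lambda>(p,q). p + q) ` (P \<times> Q)" by (auto simp: sumset_def)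
    then show ?thesis using assms by simp
  qed
  ultimately have c1: "card (?U \<union> ?V) \<le> card (sumset P Q)" by (rule card_mono[rotated])
  have "?U \<inter> ?V \<subseteq> (\<lambda>k. p0 + q0 + k) ` (H1 \<inter> H2)"
  proof
    fix y assume "y \<in> ?U \<inter> ?V"
    then obtain p q where pq: "p \<in> P" "q \<in> Q" "y = p0 + q" "y = p + q0" by auto
    then have "q - q0 = p - p0" by (simp add: algebra_simps)
    then have "q - q0 \<in> H1 \<inter> H2" using assms(5,6) pq by auto
    moreover have "y = p0 + q0 + (q - q0)" using pq by simp
    ultimately show "y \<in> (\<lambda>k. p0 + q0 + k) ` (H1 \<inter> H2)" by blast
  qed
  note sub = this
  have c2: "card (?U \<inter> ?V) \<le> card (H1 \<inter> H2)"
  proof -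
    have "card (?U \<inter> ?V) \<le> card ((\<lambda>k. p0 + q0 + k) ` (H1 \<inter> H2))"
      by (rule card_mono[OF finite_imageI[OF assms(7)] sub])
    also have "\<dots> \<le> card (H1 \<inter> H2)" by (rule card_image_le[OF assms(7)])
    finally show ?thesis .
  qed
  have "card ?U + card ?V = card (?U \<union> ?V) + card (?U \<inter> ?V)" using card_Un_Int[OF fin] .
  moreover have "card ?U = card Q" "card ?V = card P" by (rule card_translate, rule card_translate')
  ultimately show ?thesis using c1 c2 by linarith
qed


lemma finite_sumset: "finite P \<Longrightarrow> finite Q \<Longrightarrow> finite (sumset P Q)"
proof -
  assume "finite P" "finite Q"
  moreover have "sumset P Q = (\<lambda>(p,q). p + q) ` (P \<times> Q)" by (auto simp: sumset_def)
  ultimately show ?thesis by simp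
qed

lemma cross_mem:
  assumes "finite C1" "x + t \<in> C2" "t \<in> Stab C1" "h \<in> Stab C2" "x + h \<notin> C1"
  shows "x + t + h \<in> C2 - C1"
proof
  have "h + (x + t) \<in> C2" by (rule Stab_mem[OF assms(4,2)])
  then show "x + t + h \<in> C2" by (simp add: add_ac)
  show "x + t + h \<notin> C1"
  proof
    assume "x + t + h \<in> C1"
    then have "- t + (x + t + h) \<in> C1" by (rule Stab_mem[OF Stab_uminus[OF assms(1,3)]])
    then show False using assms(5) by (simp add: algebra_simps)
  qed
qed

lemma half_bound:
  fixes C1 C2 :: "'a::ab_group_add set"
  assumes fin: "finite C1" "finite C2" and x: "x \<in> C1" "x \<in> C2"
    and Q: "(\<lambda>h. x + h) ` Stab C2 - C1 \<noteq> {}"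
  shows "card ((\<lambda>h. x + h) ` Stab C1 \<inter> C2) + card ((\<lambda>h. x + h) ` Stab C2 - C1)
     \<le> card (C2 - C1) + card (Stab C1 \<inter> Stab C2)"
proof -
  let ?P = "(\<lambda>h. x + h) ` Stab C1 \<inter> C2" and ?Q = "(\<lambda>h. x + h) ` Stab C2 - C1"
  have fH: "finite (Stab C1)" "finite (Stab C2)" using Stab_finite fin x by blast+
  have fPQ: "finite ?P" "finite ?Q" using fH by auto
  have xP: "x \<in> ?P" using x Stab_zero[of C1] by (auto intro!: image_eqI[of _ _ 0])
  obtain q0 where q0: "q0 \<in> ?Q" using Q by blast
  have b: "card ?P + card ?Q \<le> card (sumset ?P ?Q) + card (Stab C1 \<inter> Stab C2)"
  proof (rule sum_bound[OF fPQ xP q0])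
    show "\<forall>p\<in>?P. p - x \<in> Stab C1" by auto
    show "\<forall>q\<in>?Q. q - q0 \<in> Stab C2"
    proof
      fix q assume "q \<in> ?Q"
      then obtain h where h: "h \<in> Stab C2" "q = x + h" by auto
      obtain h0 where h0: "h0 \<in> Stab C2" "q0 = x + h0" using q0 by auto
      have "h - h0 \<in> Stab C2" by (rule Stab_diff[OF fin(2) h(1) h0(1)])
      then show "q - q0 \<in> Stab C2" using h h0 by simp
    qed
    show "finite (Stab C1 \<inter> Stab C2)" using fH by auto
  qed
  have sub: "(\<lambda>y. y - x) ` sumset ?P ?Q \<subseteq> C2 - C1"
  proof
    fix z assume "z \<in> (\<lambda>y. y - x) ` sumset ?P ?Q"
    then obtain p q where pq: "p \<in> ?P" "q \<in> ?Q" "z = p + q - x" by (auto simp: sumset_def)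
    then obtain t h where th: "t \<in> Stab C1" "p = x + t" "h \<in> Stab C2" "q = x + h" by auto
    have "x + t + h \<in> C2 - C1"
      by (rule cross_mem[OF fin(1)]) (use pq th in auto)
    then show "z \<in> C2 - C1" using pq th by (simp add: algebra_simps)
  qed
  have "card (sumset ?P ?Q) = card ((\<lambda>y. y - x) ` sumset ?P ?Q)"
    by (rule card_image[symmetric]) (auto simp: inj_on_def)
  also have "\<dots> \<le> card (C2 - C1)" by (rule card_mono[OF _ sub]) (use fin in auto)
  finally show ?thesis using b by linarith
qed

lemma card_coset: "card ((\<lambda>h. x + h) ` H) = card (H :: 'a::ab_group_add set)"
  by (rule card_translate)

lemma card_split:
  assumes "finite T"
  shows "card (T \<inter> C) + card (T - C) = card T"
proof -
  have "T = (T \<inter> C) \<union> (T - C)" by auto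
  then have "card T = card ((T \<inter> C) \<union> (T - C))" by simp
  also have "\<dots> = card (T \<inter> C) + card (T - C)" by (rule card_Un_disjoint) (use assms in auto)
  finally show ?thesis by simp
qed

lemma union_key:
  fixes C1 C2 :: "'a::ab_group_add set"
  assumes fin: "finite C1" "finite C2" and int: "C1 \<inter> C2 \<noteq> {}"
    and n1: "\<not> C1 \<subseteq> C2" and n2: "\<not> C2 \<subseteq> C1"
  shows "card (Stab C1) \<le> card (C2 - C1) + card (Stab C1 \<inter> Stab C2)
       \<or> card (Stab C2) \<le> card (C1 - C2) + card (Stab C1 \<inter> Stab C2)"
proof (cases "\<exists>x\<in>C1 \<inter> C2. \<not> ((\<lambda>h. x + h) ` Stab C2 \<subseteq> C1) \<or> \<not> ((\<lambda>h. x + h) ` Stab C1 \<subseteq> C2)")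
  case True
  then obtain x where x: "x \<in> C1" "x \<in> C2"
    and nf: "\<not> ((\<lambda>h. x + h) ` Stab C2 \<subseteq> C1) \<or> \<not> ((\<lambda>h. x + h) ` Stab C1 \<subseteq> C2)" by blast
  have fH: "finite (Stab C1)" "finite (Stab C2)" using Stab_finite fin x by blast+
  let ?K = "Stab C1 \<inter> Stab C2"
  let ?P1 = "(\<lambda>h. x + h) ` Stab C1 \<inter> C2" and ?Q1 = "(\<lambda>h. x + h) ` Stab C1 - C2"
  let ?P2 = "(\<lambda>h. x + h) ` Stab C2 \<inter> C1" and ?Q2 = "(\<lambda>h. x + h) ` Stab C2 - C1"
  have s1: "card ?P1 + card ?Q1 = card (Stab C1)"
    using card_split[of "(\<lambda>h. x + h) ` Stab C1" C2] fH card_coset[of x "Stab C1"] by simp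
  have s2: "card ?P2 + card ?Q2 = card (Stab C2)"
    using card_split[of "(\<lambda>h. x + h) ` Stab C2" C1] fH card_coset[of x "Stab C2"] by simp
  have int_comm: "Stab C2 \<inter> Stab C1 = ?K" by auto
  show ?thesis
  proof (cases "?Q2 = {}")
    case True
    then have Q1: "?Q1 \<noteq> {}" using nf by auto
    have "card ?P2 + card ?Q1 \<le> card (C1 - C2) + card ?K"
      using half_bound[OF fin(2,1) x(2,1) Q1] int_comm by simp
    moreover have "card ?P2 = card (Stab C2)" using s2 True by simp
    ultimately show ?thesis by linarith
  next
    case Q2: False
    have b2: "card ?P1 + card ?Q2 \<le> card (C2 - C1) + card ?K"
      using half_bound[OF fin x Q2] by simp
    show ?thesis
    proof (cases "?Q1 = {}")
      case True
      then have "card ?Q1 = 0" by (simp only: card.empty)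
      then have "card ?P1 = card (Stab C1)" using s1 by linarith
      then show ?thesis using b2 by linarith
    next
      case False
      have "card ?P2 + card ?Q1 \<le> card (C1 - C2) + card ?K"
        using half_bound[OF fin(2,1) x(2,1) False] int_comm by simp
      then show ?thesis using b2 s1 s2 by linarith
    qed
  qed
next
  case False
  then have full: "\<And>x. x \<in> C1 \<Longrightarrow> x \<in> C2 \<Longrightarrow> (\<lambda>h. x + h) ` Stab C2 \<subseteq> C1 \<and> (\<lambda>h. x + h) ` Stab C1 \<subseteq> C2"
    by blast
  obtain y where y: "y \<in> C2" "y \<notin> C1" using n2 by blast
  obtain z where z: "z \<in> C1" "z \<notin> C2" using n1 by blast
  have ys: "(\<lambda>h. y + h) ` Stab C2 \<subseteq> C2 - C1"
  proof
    fix w assume "w \<in> (\<lambda>h. y + h) ` Stab C2"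
    then obtain h where h: "h \<in> Stab C2" "w = y + h" by auto
    have w2: "w \<in> C2" using Stab_mem[OF h(1) y(1)] h by (simp add: add_ac)
    moreover have "w \<notin> C1"
    proof
      assume "w \<in> C1"
      then have "(\<lambda>h. w + h) ` Stab C2 \<subseteq> C1" using full w2 by blast
      moreover have "- h \<in> Stab C2" by (rule Stab_uminus[OF fin(2) h(1)])
      ultimately have "w + - h \<in> C1" by blast
      then show False using y h by simp
    qed
    ultimately show "w \<in> C2 - C1" by blast
  qed
  have zs: "(\<lambda>h. z + h) ` Stab C1 \<subseteq> C1 - C2"
  proof
    fix w assume "w \<in> (\<lambda>h. z + h) ` Stab C1"
    then obtain h where h: "h \<in> Stab C1" "w = z + h" by auto
    have w1: "w \<in> C1" using Stab_mem[OF h(1) z(1)] h by (simp add: add_ac)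
    moreover have "w \<notin> C2"
    proof
      assume "w \<in> C2"
      then have "(\<lambda>h. w + h) ` Stab C1 \<subseteq> C2" using full w1 by blast
      moreover have "- h \<in> Stab C1" by (rule Stab_uminus[OF fin(1) h(1)])
      ultimately have "w + - h \<in> C2" by blast
      then show False using z h by simp
    qed
    ultimately show "w \<in> C1 - C2" by blast
  qed
  have "card (Stab C2) \<le> card (C2 - C1)"
    using card_mono[OF _ ys] fin card_coset[of y "Stab C2"] by simp
  moreover have "card (Stab C1) \<le> card (C1 - C2)"
    using card_mono[OF _ zs] fin card_coset[of z "Stab C1"] by simp
  ultimately show ?thesis by linarith
qed

lemma union_lemma:
  fixes C1 C2 :: "'a::ab_group_add set"
  assumes fin: "finite C1" "finite C2" and int: "C1 \<inter> C2 \<noteq> {}"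
  shows "min (card C1 + card (Stab C1)) (card C2 + card (Stab C2))
     \<le> card (C1 \<union> C2) + card (Stab (C1 \<union> C2))"
proof (cases "C1 \<subseteq> C2 \<or> C2 \<subseteq> C1")
  case True
  then show ?thesis
  proof
    assume "C1 \<subseteq> C2" then have "C1 \<union> C2 = C2" by blast
    then show ?thesis by simp
  next
    assume "C2 \<subseteq> C1" then have "C1 \<union> C2 = C1" by blast
    then show ?thesis by simp
  qed
next
  case False
  have ne: "C1 \<union> C2 \<noteq> {}" using int by blast
  have fS: "finite (Stab (C1 \<union> C2))" using Stab_finite[OF _ ne] fin by simp
  have "Stab C1 \<inter> Stab C2 \<subseteq> Stab (C1 \<union> C2)" unfolding Stab_def by auto
  then have kS: "card (Stab C1 \<inter> Stab C2) \<le> card (Stab (C1 \<union> C2))" using card_mono fS by blast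
  have u1: "card (C1 \<union> C2) = card C1 + card (C2 - C1)"
  proof -
    have "C1 \<union> C2 = C1 \<union> (C2 - C1)" by auto
    then show ?thesis using card_Un_disjoint[of C1 "C2 - C1"] fin by auto
  qed
  have u2: "card (C1 \<union> C2) = card C2 + card (C1 - C2)"
  proof -
    have "C1 \<union> C2 = C2 \<union> (C1 - C2)" by auto
    then show ?thesis using card_Un_disjoint[of C2 "C1 - C2"] fin by auto
  qed
  have "card (Stab C1) \<le> card (C2 - C1) + card (Stab C1 \<inter> Stab C2)
       \<or> card (Stab C2) \<le> card (C1 - C2) + card (Stab C1 \<inter> Stab C2)"
    using union_key[OF fin int] False by blast
  then show ?thesis using u1 u2 kS by linarith
qed


lemma union_family:
  fixes X0 :: "'a::ab_group_add set"
  assumes "finite F" "finite X0" "N \<le> card X0 + card (Stab X0)"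
    and "\<forall>Y\<in>F. finite Y \<and> Y \<inter> X0 \<noteq> {} \<and> N \<le> card Y + card (Stab Y)"
  shows "N \<le> card (X0 \<union> \<Union>F) + card (Stab (X0 \<union> \<Union>F))"
  using assms(1,4)
proof (induction F rule: finite_induct)
  case empty
  then show ?case using assms(3) by simp
next
  case (insert Y F)
  have Y: "finite Y" "Y \<inter> X0 \<noteq> {}" "N \<le> card Y + card (Stab Y)" using insert.prems by auto
  have IH: "N \<le> card (X0 \<union> \<Union>F) + card (Stab (X0 \<union> \<Union>F))" using insert by auto
  have fU: "finite (X0 \<union> \<Union>F)" using insert assms(2) by auto
  have int: "(X0 \<union> \<Union>F) \<inter> Y \<noteq> {}" using Y(2) by blast
  have eq: "X0 \<union> \<Union>(insert Y F) = (X0 \<union> \<Union>F) \<union> Y" by auto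
  show ?case using union_lemma[OF fU Y(1) int] IH Y(3) unfolding eq by linarith
qed

lemma sumset_commute: "sumset A B = sumset B (A :: 'a::ab_group_add set)"
  unfolding sumset_def using add.commute by blast

lemma et_trans_eq:
  "(\<lambda>y. y + e) ` (B \<inter> (\<lambda>y. y - e) ` A) = A \<inter> (\<lambda>y. y + (e::'a::ab_group_add)) ` B"
proof
  show "(\<lambda>y. y + e) ` (B \<inter> (\<lambda>y. y - e) ` A) \<subseteq> A \<inter> (\<lambda>y. y + e) ` B" by auto
  show "A \<inter> (\<lambda>y. y + e) ` B \<subseteq> (\<lambda>y. y + e) ` (B \<inter> (\<lambda>y. y - e) ` A)"
  proof
    fix x assume x: "x \<in> A \<inter> (\<lambda>y. y + e) ` B"
    then obtain b where b: "b \<in> B" "x = b + e" by auto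
    then have "b \<in> (\<lambda>y. y - e) ` A" using x by (auto intro!: image_eqI[of _ _ x])
    then have "b \<in> B \<inter> (\<lambda>y. y - e) ` A" using b by blast
    then show "x \<in> (\<lambda>y. y + e) ` (B \<inter> (\<lambda>y. y - e) ` A)" using b(2) by blast
  qed
qed

lemma et_card1:
  fixes A B :: "'a::ab_group_add set"
  assumes "finite A" "finite B"
  shows "card (A \<union> (\<lambda>y. y + e) ` B) + card (B \<inter> (\<lambda>y. y - e) ` A) = card A + card B"
proof -
  have "card (A \<union> (\<lambda>y. y + e) ` B) + card (A \<inter> (\<lambda>y. y + e) ` B) = card A + card ((\<lambda>y. y + e) ` B)"
    by (rule card_Un_Int[symmetric]) (use assms in auto)
  moreover have "card (A \<inter> (\<lambda>y. y + e) ` B) = card (B \<inter> (\<lambda>y. y - e) ` A)"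
    using card_translate'[of e "B \<inter> (\<lambda>y. y - e) ` A"] et_trans_eq[of e B A] by simp
  moreover have "card ((\<lambda>y. y + e) ` B) = card B" by (rule card_translate')
  ultimately show ?thesis by linarith
qed

lemma et_card2:
  fixes A B :: "'a::ab_group_add set"
  assumes "finite A" "finite B"
  shows "card (A \<inter> (\<lambda>y. y + e) ` B) + card (B \<union> (\<lambda>y. y - e) ` A) = card A + card B"
proof -
  have "card (B \<union> (\<lambda>y. y - e) ` A) + card (B \<inter> (\<lambda>y. y - e) ` A) = card B + card ((\<lambda>y. y - e) ` A)"
    by (rule card_Un_Int[symmetric]) (use assms in auto)
  moreover have "card (A \<inter> (\<lambda>y. y + e) ` B) = card (B \<inter> (\<lambda>y. y - e) ` A)"
    using card_translate'[of e "B \<inter> (\<lambda>y. y - e) ` A"] et_trans_eq[of e B A] by simp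
  moreover have "card ((\<lambda>y. y - e) ` A) = card A"
    using card_translate'[of "- e" A] by simp
  ultimately show ?thesis by linarith
qed

lemma et_sub1:
  "sumset (A \<union> (\<lambda>y. y + e) ` B) (B \<inter> (\<lambda>y. y - e) ` A) \<subseteq> sumset A (B :: 'a::ab_group_add set)"
proof
  fix x assume "x \<in> sumset (A \<union> (\<lambda>y. y + e) ` B) (B \<inter> (\<lambda>y. y - e) ` A)"
  then obtain p q where pq: "p \<in> A \<union> (\<lambda>y. y + e) ` B" "q \<in> B" "q \<in> (\<lambda>y. y - e) ` A" "x = p + q"
    unfolding sumset_def by blast
  show "x \<in> sumset A B"
  proof (cases "p \<in> A")
    case True then show ?thesis using pq unfolding sumset_def by blast
  next
    case False
    then obtain b where b: "b \<in> B" "p = b + e" using pq by auto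
    obtain a where a: "a \<in> A" "q = a - e" using pq by auto
    have "x = a + b" using pq a b by (simp add: algebra_simps)
    then show ?thesis using a b unfolding sumset_def by blast
  qed
qed

lemma et_sub2:
  "sumset (A \<inter> (\<lambda>y. y + e) ` B) (B \<union> (\<lambda>y. y - e) ` A) \<subseteq> sumset A (B :: 'a::ab_group_add set)"
proof
  fix x assume "x \<in> sumset (A \<inter> (\<lambda>y. y + e) ` B) (B \<union> (\<lambda>y. y - e) ` A)"
  then obtain p q where pq: "p \<in> A" "p \<in> (\<lambda>y. y + e) ` B" "q \<in> B \<union> (\<lambda>y. y - e) ` A" "x = p + q"
    unfolding sumset_def by blast
  show "x \<in> sumset A B"
  proof (cases "q \<in> B")
    case True then show ?thesis using pq unfolding sumset_def by blast
  next
    case False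
    then obtain a where a: "a \<in> A" "q = a - e" using pq by auto
    obtain b where b: "b \<in> B" "p = b + e" using pq by auto
    have "x = a + b" using pq a b by (simp add: algebra_simps)
    then show ?thesis using a b unfolding sumset_def by blast
  qed
qed

lemma kneser_step:
  fixes A B :: "'a::ab_group_add set"
  assumes fin: "finite A" "finite B" and ne: "A \<noteq> {}" "B \<noteq> {}" and le: "card B \<le> card A"
    and IH: "\<And>A' B' :: 'a set. finite A' \<Longrightarrow> finite B' \<Longrightarrow> A' \<noteq> {} \<Longrightarrow> B' \<noteq> {}
      \<Longrightarrow> min (card A') (card B') < card B
      \<Longrightarrow> card A' + card B' \<le> card (sumset A' B') + card (Stab (sumset A' B'))"
  shows "card A + card B \<le> card (sumset A B) + card (Stab (sumset A B))"
proof (cases "\<exists>a\<in>A. \<exists>b\<in>B. \<not> ((\<lambda>y. a - b + y) ` B \<subseteq> A)")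
  case False
  then have all: "\<And>a b y. a \<in> A \<Longrightarrow> b \<in> B \<Longrightarrow> y \<in> B \<Longrightarrow> a - b + y \<in> A" by blast
  obtain b0 where b0: "b0 \<in> B" using ne by blast
  let ?C = "sumset A B"
  have fC: "finite ?C" by (rule finite_sumset[OF fin])
  have neC: "?C \<noteq> {}" using ne unfolding sumset_def by blast
  have "(\<lambda>a. a + b0) ` A \<subseteq> ?C" using b0 unfolding sumset_def by blast
  then have c1: "card A \<le> card ?C" using card_mono[OF fC] card_translate'[of b0 A] by metis
  have sub: "(\<lambda>b. b - b0) ` B \<subseteq> Stab ?C"
  proof
    fix g assume "g \<in> (\<lambda>b. b - b0) ` B"
    then obtain b where b: "b \<in> B" "g = b - b0" by auto
    show "g \<in> Stab ?C" unfolding Stab_def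
    proof safe
      fix c assume "c \<in> ?C"
      then obtain a b' where ab: "a \<in> A" "b' \<in> B" "c = a + b'" unfolding sumset_def by blast
      have "a - b0 + b' \<in> A" by (rule all[OF ab(1) b0 ab(2)])
      moreover have "g + c = (a - b0 + b') + b" using ab b by (simp add: algebra_simps)
      ultimately show "g + c \<in> ?C" using b unfolding sumset_def by blast
    qed
  qed
  have "card ((\<lambda>b. b - b0) ` B) = card B" using card_translate'[of "- b0" B] by simp
  then have c2: "card B \<le> card (Stab ?C)" using card_mono[OF Stab_finite[OF fC neC] sub] by simp
  show ?thesis using c1 c2 by linarith
next
  case True
  then obtain a0 b0 where a0: "a0 \<in> A" and b0: "b0 \<in> B" and g0: "\<not> ((\<lambda>y. a0 - b0 + y) ` B \<subseteq> A)"
    by blast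
  define N where "N = card A + card B"
  let ?C = "sumset A B"
  define e0 where "e0 = a0 - b0"
  define A1 where "A1 = A \<union> (\<lambda>y. y + e0) ` B"
  define B1 where "B1 = B \<inter> (\<lambda>y. y - e0) ` A"
  define X0 where "X0 = sumset A1 B1"
  define C2 where "C2 = (\<lambda>a. sumset (A \<inter> (\<lambda>y. y + (a - b0)) ` B) (B \<union> (\<lambda>y. y - (a - b0)) ` A))"
  define good where "good = {a \<in> A. \<not> ((\<lambda>y. a - b0 + y) ` B \<subseteq> A)}"
  have fA1: "finite A1" "finite B1" using fin unfolding A1_def B1_def by auto
  have b0B1: "b0 \<in> B1" unfolding B1_def e0_def using b0 a0 by (auto intro!: image_eqI[of _ _ a0])
  have a0A1: "a0 \<in> A1" unfolding A1_def using a0 by auto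
  have cB1: "card B1 < card B"
  proof (rule psubset_card_mono[OF fin(2)])
    obtain y where y: "y \<in> B" "a0 - b0 + y \<notin> A" using g0 by blast
    have "y \<notin> B1"
    proof
      assume "y \<in> B1"
      then obtain a where "a \<in> A" "y = a - e0" unfolding B1_def by auto
      then show False using y unfolding e0_def by (simp add: algebra_simps)
    qed
    then show "B1 \<subset> B" unfolding B1_def using y by blast
  qed
  have X0N: "N \<le> card X0 + card (Stab X0)"
  proof -
    have "card A1 + card B1 = N" unfolding A1_def B1_def N_def by (rule et_card1[OF fin])
    moreover have "card A1 + card B1 \<le> card X0 + card (Stab X0)" unfolding X0_def
      by (rule IH[OF fA1]) (use a0A1 b0B1 cB1 in auto)
    ultimately show ?thesis by simp
  qed
  have X0C: "X0 \<subseteq> ?C" unfolding X0_def A1_def B1_def by (rule et_sub1)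
  have famC: "\<And>a. C2 a \<subseteq> ?C" unfolding C2_def by (rule et_sub2)
  have fam: "\<forall>Y\<in>C2 ` good. finite Y \<and> Y \<inter> X0 \<noteq> {} \<and> N \<le> card Y + card (Stab Y)"
  proof
    fix Y assume "Y \<in> C2 ` good"
    then obtain a where a: "a \<in> A" "\<not> ((\<lambda>y. a - b0 + y) ` B \<subseteq> A)" "Y = C2 a"
      unfolding good_def by blast
    define A2 where "A2 = A \<inter> (\<lambda>y. y + (a - b0)) ` B"
    define B2 where "B2 = B \<union> (\<lambda>y. y - (a - b0)) ` A"
    have Y: "Y = sumset A2 B2" unfolding A2_def B2_def a(3) C2_def by simp
    have fA2: "finite A2" "finite B2" using fin unfolding A2_def B2_def by auto
    have aA2: "a \<in> A2" unfolding A2_def using a(1) b0 by (auto intro!: image_eqI[of _ _ b0])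
    have b0B2: "b0 \<in> B2" unfolding B2_def using b0 by auto
    have aA1: "a \<in> A1" unfolding A1_def using a(1) by auto
    have "card A2 < card ((\<lambda>y. y + (a - b0)) ` B)"
    proof (rule psubset_card_mono)
      show "finite ((\<lambda>y. y + (a - b0)) ` B)" using fin by auto
      obtain y where y: "y \<in> B" "a - b0 + y \<notin> A" using a(2) by blast
      have "y + (a - b0) \<notin> A2" using y unfolding A2_def by (simp add: add_ac)
      then show "A2 \<subset> (\<lambda>y. y + (a - b0)) ` B" unfolding A2_def using y by blast
    qed
    then have cA2: "card A2 < card B" using card_translate'[of "a - b0" B] by simp
    have "card A2 + card B2 = N" unfolding A2_def B2_def N_def by (rule et_card2[OF fin])
    moreover have "card A2 + card B2 \<le> card Y + card (Stab Y)" unfolding Y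
      by (rule IH[OF fA2]) (use aA2 b0B2 cA2 in auto)
    moreover have "a + b0 \<in> Y" unfolding Y sumset_def using aA2 b0B2 by blast
    moreover have "a + b0 \<in> X0" unfolding X0_def sumset_def using aA1 b0B1 by blast
    moreover have "finite Y" unfolding Y by (rule finite_sumset[OF fA2])
    ultimately show "finite Y \<and> Y \<inter> X0 \<noteq> {} \<and> N \<le> card Y + card (Stab Y)" by auto
  qed
  have fgood: "finite (C2 ` good)" using fin unfolding good_def by auto
  have fX0: "finite X0" unfolding X0_def by (rule finite_sumset[OF fA1])
  have main: "N \<le> card (X0 \<union> \<Union>(C2 ` good)) + card (Stab (X0 \<union> \<Union>(C2 ` good)))"
    by (rule union_family[OF fgood fX0 X0N fam])
  have eq: "X0 \<union> \<Union>(C2 ` good) = ?C"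
  proof
    show "X0 \<union> \<Union>(C2 ` good) \<subseteq> ?C" using X0C famC by blast
    show "?C \<subseteq> X0 \<union> \<Union>(C2 ` good)"
    proof
      fix c assume "c \<in> ?C"
      then obtain a b where ab: "a \<in> A" "b \<in> B" "c = a + b" unfolding sumset_def by blast
      show "c \<in> X0 \<union> \<Union>(C2 ` good)"
      proof (cases "a \<in> good")
        case True
        have "a \<in> A \<inter> (\<lambda>y. y + (a - b0)) ` B" using ab(1) b0 by (auto intro!: image_eqI[of _ _ b0])
        moreover have "b \<in> B \<union> (\<lambda>y. y - (a - b0)) ` A" using ab by auto
        ultimately have "c \<in> C2 a" unfolding C2_def sumset_def using ab(3) by blast
        then show ?thesis using True by blast
      next
        case False
        then have "a - b0 + b \<in> A" using ab unfolding good_def by blast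
        then have "a - b0 + b \<in> A1" unfolding A1_def by blast
        moreover have "c = (a - b0 + b) + b0" using ab by simp
        ultimately have "c \<in> X0" unfolding X0_def sumset_def using b0B1 by blast
        then show ?thesis by blast
      qed
    qed
  qed
  show ?thesis using main unfolding eq N_def .
qed

theorem kneser_weak:
  fixes A B :: "'a::ab_group_add set"
  assumes "finite A" "finite B" "A \<noteq> {}" "B \<noteq> {}"
  shows "card A + card B \<le> card (sumset A B) + card (Stab (sumset A B))"
proof -
  have "\<forall>A B :: 'a set. finite A \<and> finite B \<and> A \<noteq> {} \<and> B \<noteq> {} \<and> min (card A) (card B) = m
     \<longrightarrow> card A + card B \<le> card (sumset A B) + card (Stab (sumset A B))" for m
  proof (induction m rule: less_induct)
    case (less m)
    show ?case
    proof (intro allI impI)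
      fix A B :: "'a set"
      assume h: "finite A \<and> finite B \<and> A \<noteq> {} \<and> B \<noteq> {} \<and> min (card A) (card B) = m"
      show "card A + card B \<le> card (sumset A B) + card (Stab (sumset A B))"
      proof (cases "card B \<le> card A")
        case True
        show ?thesis
        proof (rule kneser_step)
          fix A' B' :: "'a set"
          assume "finite A'" "finite B'" "A' \<noteq> {}" "B' \<noteq> {}" "min (card A') (card B') < card B"
          then show "card A' + card B' \<le> card (sumset A' B') + card (Stab (sumset A' B'))"
            using less.IH[of "min (card A') (card B')"] h True by auto
        qed (use h True in auto)
      next
        case False
        have "card B + card A \<le> card (sumset B A) + card (Stab (sumset B A))"
        proof (rule kneser_step)
          fix A' B' :: "'a set"
          assume "finite A'" "finite B'" "A' \<noteq> {}" "B' \<noteq> {}" "min (card A') (card B') < card A"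
          then show "card A' + card B' \<le> card (sumset A' B') + card (Stab (sumset A' B'))"
            using less.IH[of "min (card A') (card B')"] h False by auto
        qed (use h False in auto)
        then show ?thesis using sumset_commute[of B A] by simp
      qed
    qed
  qed
  then show ?thesis using assms by blast
qed



lemma limsup_sub_aux:
  fixes y z :: "nat \<Rightarrow> ereal"
  assumes nn: "\<And>n. 0 \<le> y n" "\<And>n. 0 \<le> z n"
    and r: "strict_mono r" "(y \<circ> r) \<longlonglongrightarrow> limsup y"
  shows "limsup y + liminf (z \<circ> r) \<le> limsup (\<lambda>n. y n + z n)"
proof -
  have l: "liminf (y \<circ> r) = limsup y" by (rule lim_imp_Liminf[OF _ r(2)]) simp
  have "liminf (y \<circ> r) + liminf (z \<circ> r) \<le> liminf (\<lambda>n. (y \<circ> r) n + (z \<circ> r) n)"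
    by (rule Liminf_add_le) (auto simp: nn)
  also have "\<dots> \<le> limsup (\<lambda>n. (y \<circ> r) n + (z \<circ> r) n)" by (rule Liminf_le_Limsup) simp
  also have "(\<lambda>n. (y \<circ> r) n + (z \<circ> r) n) = (\<lambda>n. y n + z n) \<circ> r" by auto
  also have "limsup \<dots> \<le> limsup (\<lambda>n. y n + z n)" by (rule limsup_subseq_mono[OF r(1)])
  finally show ?thesis using l by (simp add: comp_def)
qed

lemma density_ineqs:
  fixes x y z u :: "nat \<Rightarrow> ereal"
  assumes nn: "\<And>n. 0 \<le> y n" "\<And>n. 0 \<le> z n"
    and u: "u \<longlonglongrightarrow> 0"
    and ev: "eventually (\<lambda>n. y n + z n \<le> u n + x n) sequentially"
  shows "liminf y + liminf z \<le> liminf x" "limsup y + liminf z \<le> limsup x"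
    "y = z \<Longrightarrow> limsup y + limsup z \<le> limsup x"
proof -
  have li: "liminf (\<lambda>n. u n + x n) = liminf x"
    using ereal_liminf_lim_add[OF u, of x] by simp
  have ls: "limsup (\<lambda>n. u n + x n) = limsup x"
    using ereal_limsup_lim_add[OF u, of x] by simp
  have "liminf y + liminf z \<le> liminf (\<lambda>n. y n + z n)"
    by (rule Liminf_add_le) (auto simp: nn)
  also have "\<dots> \<le> liminf (\<lambda>n. u n + x n)" by (rule Liminf_mono[OF ev])
  finally show "liminf y + liminf z \<le> liminf x" using li by simp
  have mono: "limsup (\<lambda>n. y n + z n) \<le> limsup x"
    using Limsup_mono[OF ev] ls by simp
  obtain r where r: "strict_mono r" "(y \<circ> r) \<longlonglongrightarrow> limsup y" using limsup_subseq_lim by blast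
  have "limsup y + liminf z \<le> limsup y + liminf (z \<circ> r)"
    by (rule add_left_mono) (rule liminf_subseq_mono[OF r(1)])
  also have "\<dots> \<le> limsup (\<lambda>n. y n + z n)" by (rule limsup_sub_aux[OF nn r])
  finally show "limsup y + liminf z \<le> limsup x" using mono by simp
  assume yz: "y = z"
  have l: "liminf (y \<circ> r) = limsup y" by (rule lim_imp_Liminf[OF _ r(2)]) simp
  have "limsup y + limsup z = limsup y + liminf (z \<circ> r)" using l yz by simp
  also have "\<dots> \<le> limsup (\<lambda>n. y n + z n)" by (rule limsup_sub_aux[OF nn r])
  finally show "limsup y + limsup z \<le> limsup x" using mono by simp
qed


section \<open>Subgroups and cosets\<close>

lemma sg_zero: "is_subgroup H \<Longrightarrow> 0 \<in> H" unfolding is_subgroup_def by blast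
lemma sg_diff: "is_subgroup H \<Longrightarrow> x \<in> H \<Longrightarrow> y \<in> H \<Longrightarrow> x - y \<in> H"
  unfolding is_subgroup_def by blast
lemma sg_uminus: "is_subgroup H \<Longrightarrow> x \<in> H \<Longrightarrow> - x \<in> H"
  using sg_diff[of H 0 x] sg_zero[of H] by simp
lemma sg_add: "is_subgroup H \<Longrightarrow> x \<in> H \<Longrightarrow> y \<in> H \<Longrightarrow> x + y \<in> H"
  using sg_diff[of H x "- y"] sg_uminus[of H y] by simp

lemma coset_mem: "x \<in> (\<lambda>h. g + h) ` H \<longleftrightarrow> x - g \<in> (H :: 'a::ab_group_add set)"
proof
  assume "x \<in> (\<lambda>h. g + h) ` H" then show "x - g \<in> H" by auto
next
  assume "x - g \<in> H" then show "x \<in> (\<lambda>h. g + h) ` H" by (auto intro!: image_eqI[of _ _ "x - g"])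
qed

lemma coset_eq:
  assumes "is_subgroup H" "x \<in> (\<lambda>h. g + h) ` H"
  shows "(\<lambda>h. g + h) ` H = (\<lambda>h. x + h) ` H"
proof -
  have xg: "x - g \<in> H" using assms(2) coset_mem by blast
  show ?thesis
  proof (rule set_eqI)
    fix y
    have "y - g = (y - x) + (x - g)" "y - x = (y - g) - (x - g)" by simp_all
    then have "y - g \<in> H \<longleftrightarrow> y - x \<in> H"
      using sg_add[OF assms(1) _ xg, of "y - x"] sg_diff[OF assms(1) _ xg, of "y - g"] by metis
    then show "y \<in> (\<lambda>h. g + h) ` H \<longleftrightarrow> y \<in> (\<lambda>h. x + h) ` H" by (simp add: coset_mem)
  qed
qed

lemma cosets_disj:
  assumes "is_subgroup H" "D \<in> cosets H" "D' \<in> cosets H" "D \<inter> D' \<noteq> {}"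
  shows "D = D'"
proof -
  obtain g where g: "D = (\<lambda>h. g + h) ` H" using assms(2) unfolding cosets_def by blast
  obtain g' where g': "D' = (\<lambda>h. g' + h) ` H" using assms(3) unfolding cosets_def by blast
  obtain x where x: "x \<in> D" "x \<in> D'" using assms(4) by blast
  show ?thesis using coset_eq[OF assms(1), of x g] coset_eq[OF assms(1), of x g'] x g g' by simp
qed

lemma coset_self: "is_subgroup H \<Longrightarrow> g \<in> (\<lambda>h. g + h) ` H"
  using sg_zero[of H] by (auto intro!: image_eqI[of _ _ 0])

lemma cosets_Union: "is_subgroup H \<Longrightarrow> \<Union>(cosets H) = UNIV"
  unfolding cosets_def using coset_self by blast

lemma coset_of_mem:
  assumes "is_subgroup H" "D \<in> cosets H" "x \<in> D"
  shows "D = (\<lambda>h. x + h) ` H"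
proof -
  obtain g where g: "D = (\<lambda>h. g + h) ` H" using assms(2) unfolding cosets_def by blast
  then show ?thesis using coset_eq[OF assms(1), of x g] assms(3) by simp
qed

lemma H_in_cosets: "is_subgroup H \<Longrightarrow> H \<in> cosets H"
proof -
  have "(\<lambda>h. 0 + h) ` H = H" by simp
  then show "H \<in> cosets H" unfolding cosets_def by (metis rangeI)
qed

locale exh =
  fixes Gs :: "nat \<Rightarrow> 'a::ab_group_add set"
  assumes ex: "exhausting_seq Gs"
begin

lemma fin: "finite (Gs n)" using ex unfolding exhausting_seq_def by blast
lemma sgG: "is_subgroup (Gs n)" using ex unfolding exhausting_seq_def by blast
lemma monoG: "m \<le> n \<Longrightarrow> Gs m \<subseteq> Gs n" using ex unfolding exhausting_seq_def mono_def by blast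
lemma coverG: "\<exists>n. x \<in> Gs n" using ex unfolding exhausting_seq_def by blast
lemma card_pos: "0 < card (Gs n)" using fin sg_zero[OF sgG] card_gt_0_iff by blast

lemma ev_mem: "eventually (\<lambda>n. x \<in> Gs n) sequentially"
proof -
  obtain m where "x \<in> Gs m" using coverG by blast
  then show ?thesis unfolding eventually_sequentially using monoG by blast
qed

lemma ev_sub: "finite F \<Longrightarrow> eventually (\<lambda>n. F \<subseteq> Gs n) sequentially"
proof (induction F rule: finite_induct)
  case empty then show ?case by simp
next
  case (insert x F)
  show ?case using eventually_conj[OF ev_mem[of x] insert.IH] by (rule eventually_mono) simp
qed

lemma torsion: "\<exists>k. ((+) (g::'a) ^^ k) 0 = - g"
proof -
  obtain n where gn: "g \<in> Gs n" using coverG by blast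
  have pw: "((+) g ^^ k) 0 \<in> Gs n" for k
    by (induction k) (auto intro: sg_add[OF sgG] sg_zero[OF sgG] gn)
  have "\<not> inj_on (\<lambda>k. ((+) g ^^ k) 0) {..card (Gs n)}"
  proof
    assume "inj_on (\<lambda>k. ((+) g ^^ k) 0) {..card (Gs n)}"
    then have "card ((\<lambda>k. ((+) g ^^ k) 0) ` {..card (Gs n)}) = Suc (card (Gs n))"
      by (simp add: card_image)
    moreover have "card ((\<lambda>k. ((+) g ^^ k) 0) ` {..card (Gs n)}) \<le> card (Gs n)"
      by (rule card_mono[OF fin]) (use pw in auto)
    ultimately show False by simp
  qed
  then obtain i j where ij: "i < j" "((+) g ^^ i) 0 = ((+) g ^^ j) 0"
    unfolding inj_on_def by (metis linorder_neqE_nat)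
  have add: "((+) g ^^ (a + b)) 0 = ((+) g ^^ a) 0 + ((+) g ^^ b) 0" for a b
    by (induction a) (auto simp: add.assoc)
  have "((+) g ^^ j) 0 = ((+) g ^^ (j - i)) 0 + ((+) g ^^ i) 0"
    using add[of "j - i" i] ij(1) by simp
  then have z: "((+) g ^^ (j - i)) 0 = 0" using ij(2) by simp
  obtain d where d: "j - i = Suc d" using ij(1) by (metis Suc_diff_Suc)
  have "g + ((+) g ^^ d) 0 = 0" using z unfolding d by simp
  then have "((+) g ^^ d) 0 = - g" by (metis add.commute add_eq_0_iff2 minus_minus)
  then show ?thesis by blast
qed


lemma Stab_subgroup: "is_subgroup (Stab (X :: 'a set))"
proof -
  have pw: "g \<in> Stab X \<Longrightarrow> ((+) g ^^ k) 0 \<in> Stab X" for g :: 'a and k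
    by (induction k) (auto intro: Stab_add Stab_zero)
  have um: "g \<in> Stab X \<Longrightarrow> - g \<in> Stab X" for g :: 'a
    using torsion[of g] pw by metis
  show ?thesis unfolding is_subgroup_def
    using Stab_zero um Stab_add by (metis diff_conv_add_uminus)
qed

lemma coset_inter_card:
  assumes "is_subgroup H" "x \<in> Gs n"
  shows "card (((\<lambda>h. x + h) ` H) \<inter> Gs n) = card (H \<inter> Gs n)"
proof -
  have "((\<lambda>h. x + h) ` H) \<inter> Gs n = (\<lambda>h. x + h) ` (H \<inter> Gs n)"
  proof
    show "(\<lambda>h. x + h) ` H \<inter> Gs n \<subseteq> (\<lambda>h. x + h) ` (H \<inter> Gs n)"
    proof
      fix y assume y: "y \<in> (\<lambda>h. x + h) ` H \<inter> Gs n"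
      then obtain h where h: "h \<in> H" "y = x + h" by auto
      have "h = y - x" using h by simp
      then have "h \<in> Gs n" using sg_diff[OF sgG] y assms(2) by simp
      then show "y \<in> (\<lambda>h. x + h) ` (H \<inter> Gs n)" using h by blast
    qed
    show "(\<lambda>h. x + h) ` (H \<inter> Gs n) \<subseteq> (\<lambda>h. x + h) ` H \<inter> Gs n"
      using sg_add[OF sgG assms(2)] by blast
  qed
  then show ?thesis using card_translate by simp
qed

lemma ev_count:
  assumes sg: "is_subgroup H" and fc: "finite (cosets H)"
  shows "eventually (\<lambda>n. \<forall>\<D>. \<D> \<subseteq> cosets H \<longrightarrow>
            card (\<Union>\<D> \<inter> Gs n) = card \<D> * card (H \<inter> Gs n)) sequentially"
proof -
  define r where "r = (\<lambda>D::'a set. SOME x. x \<in> D)"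
  have rD: "D \<in> cosets H \<Longrightarrow> r D \<in> D" for D
  proof -
    assume "D \<in> cosets H"
    then obtain g where "D = (\<lambda>h. g + h) ` H" unfolding cosets_def by blast
    then have "g \<in> D" using coset_self[OF sg] by simp
    then show "r D \<in> D" unfolding r_def by (rule someI)
  qed
  have "eventually (\<lambda>n. r ` cosets H \<subseteq> Gs n) sequentially" by (rule ev_sub) (use fc in simp)
  then show ?thesis
  proof (rule eventually_mono)
    fix n assume sub: "r ` cosets H \<subseteq> Gs n"
    have each: "D \<in> cosets H \<Longrightarrow> card (D \<inter> Gs n) = card (H \<inter> Gs n)" for D
      using coset_of_mem[OF sg _ rD[of D]] coset_inter_card[OF sg, of "r D" n] sub by auto
    show "\<forall>\<D>. \<D> \<subseteq> cosets H \<longrightarrow> card (\<Union>\<D> \<inter> Gs n) = card \<D> * card (H \<inter> Gs n)"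
    proof (intro allI impI)
      fix \<D> assume D: "\<D> \<subseteq> cosets H"
      have fD: "finite \<D>" using D fc finite_subset by blast
      have "\<Union>\<D> \<inter> Gs n = \<Union>((\<lambda>D. D \<inter> Gs n) ` \<D>)" by blast
      then have "card (\<Union>\<D> \<inter> Gs n) = (\<Sum>D\<in>\<D>. card (D \<inter> Gs n))"
      proof (simp only:, intro card_UN_disjoint[OF fD])
        show "\<forall>i\<in>\<D>. finite (i \<inter> Gs n)" using fin by blast
        show "\<forall>i\<in>\<D>. \<forall>j\<in>\<D>. i \<noteq> j \<longrightarrow> i \<inter> Gs n \<inter> (j \<inter> Gs n) = {}"
          using cosets_disj[OF sg] D by blast
      qed
      also have "\<dots> = (\<Sum>D\<in>\<D>. card (H \<inter> Gs n))" using each D by (intro sum.cong) auto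
      finally show "card (\<Union>\<D> \<inter> Gs n) = card \<D> * card (H \<inter> Gs n)" by simp
    qed
  qed
qed

lemma ev_ratio:
  assumes sg: "is_subgroup H" and fc: "finite (cosets H)"
  shows "eventually (\<lambda>n. \<forall>\<D>. \<D> \<subseteq> cosets H \<longrightarrow>
            ratio Gs (\<Union>\<D>) n = ereal (real (card \<D>) / real (card (cosets H)))) sequentially"
  using ev_count[OF sg fc]
proof (rule eventually_mono)
  fix n assume c: "\<forall>\<D>. \<D> \<subseteq> cosets H \<longrightarrow> card (\<Union>\<D> \<inter> Gs n) = card \<D> * card (H \<inter> Gs n)"
  have "card (Gs n) = card (cosets H) * card (H \<inter> Gs n)"
    using c[rule_format, of "cosets H"] cosets_Union[OF sg] by simp
  moreover have "0 < card (H \<inter> Gs n)" using sg_zero[OF sg] sg_zero[OF sgG, of n] fin[of n]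
    by (metis IntI card_gt_0_iff empty_iff finite_Int)
  ultimately show "\<forall>\<D>. \<D> \<subseteq> cosets H \<longrightarrow>
            ratio Gs (\<Union>\<D>) n = ereal (real (card \<D>) / real (card (cosets H)))"
    using c unfolding ratio_def by auto
qed

lemma density_of_ev:
  assumes "eventually (\<lambda>n. ratio Gs X n = ereal c) sequentially"
  shows "lower_density Gs X = ereal c" "upper_density Gs X = ereal c"
proof -
  show "lower_density Gs X = ereal c" unfolding lower_density_def
    using Liminf_eq[OF assms] Liminf_const[of sequentially "ereal c"] by simp
  show "upper_density Gs X = ereal c" unfolding upper_density_def
    using Limsup_eq[OF assms] Limsup_const[of sequentially "ereal c"] by simp
qed

end

lemma pigeon:
  fixes L :: "'a::ab_group_add set"
  assumes "finite G" "finite L" "L \<noteq> {}" "card G \<le> M * card L" "finite F" "M < card F"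
    and "\<forall>x\<in>F. (\<lambda>l. x + l) ` L \<subseteq> G"
  shows "\<exists>x\<in>F. \<exists>y\<in>F. x \<noteq> y \<and> (\<lambda>l. x + l) ` L \<inter> (\<lambda>l. y + l) ` L \<noteq> {}"
proof (rule ccontr)
  assume "\<not> ?thesis"
  then have disj: "\<forall>x\<in>F. \<forall>y\<in>F. x \<noteq> y \<longrightarrow> (\<lambda>l. x + l) ` L \<inter> (\<lambda>l. y + l) ` L = {}" by blast
  have "card (\<Union>x\<in>F. (\<lambda>l. x + l) ` L) = (\<Sum>x\<in>F. card ((\<lambda>l. x + l) ` L))"
    by (rule card_UN_disjoint[OF assms(5)]) (use assms(2) disj in auto)
  also have "\<dots> = card F * card L" by (simp add: card_translate)
  finally have eq: "card (\<Union>x\<in>F. (\<lambda>l. x + l) ` L) = card F * card L" .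
  have "card (\<Union>x\<in>F. (\<lambda>l. x + l) ` L) \<le> card G" by (rule card_mono[OF assms(1)]) (use assms(7) in blast)
  then have "card F * card L \<le> M * card L" using eq assms(4) by linarith
  moreover have "0 < card L" using assms(2,3) by (simp add: card_gt_0_iff)
  ultimately show False using assms(6) by simp
qed

lemma finite_index:
  fixes H :: "'a::ab_group_add set"
  assumes sg: "is_subgroup H"
    and key: "\<And>F. finite F \<Longrightarrow> M < card F \<Longrightarrow> \<exists>x\<in>F. \<exists>y\<in>F. x \<noteq> y \<and> x - y \<in> H"
  shows "finite (cosets H)"
proof (rule ccontr)
  assume "infinite (cosets H)"
  then obtain \<D> where D: "finite \<D>" "card \<D> = Suc M" "\<D> \<subseteq> cosets H"
    using infinite_arbitrarily_large by blast
  define r where "r = (\<lambda>D::'a set. SOME x. x \<in> D)"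
  have rD: "D \<in> cosets H \<Longrightarrow> r D \<in> D" for D
  proof -
    assume "D \<in> cosets H"
    then obtain g where "D = (\<lambda>h. g + h) ` H" unfolding cosets_def by blast
    then have "g \<in> D" using coset_self[OF sg] by simp
    then show "r D \<in> D" unfolding r_def by (rule someI)
  qed
  have inj: "inj_on r \<D>"
  proof (rule inj_onI)
    fix D D' assume "D \<in> \<D>" "D' \<in> \<D>" "r D = r D'"
    then show "D = D'" using cosets_disj[OF sg, of D D'] rD D(3) by (metis disjoint_iff subsetD)
  qed
  have "card (r ` \<D>) = Suc M" using card_image[OF inj] D(2) by simp
  then obtain x y where xy: "x \<in> r ` \<D>" "y \<in> r ` \<D>" "x \<noteq> y" "x - y \<in> H"
    using key[of "r ` \<D>"] D(1) by auto
  then obtain D1 D2 where d: "D1 \<in> \<D>" "D2 \<in> \<D>" "x = r D1" "y = r D2" by blast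
  have D2eq: "D2 = (\<lambda>h. y + h) ` H" using coset_of_mem[OF sg _ rD] d D(3) by blast
  have "x \<in> D2" unfolding D2eq using xy(4) coset_mem by blast
  moreover have "x \<in> D1" using rD d D(3) by blast
  ultimately have "D1 = D2" using cosets_disj[OF sg, of D1 D2] d D(3) by blast
  then show False using xy d by simp
qed


context exh
begin

lemma ratio_uminus: "ratio Gs (uminus ` B) = ratio Gs B"
proof
  fix n
  have "(uminus ` B) \<inter> Gs n = uminus ` (B \<inter> Gs n)"
  proof
    show "uminus ` B \<inter> Gs n \<subseteq> uminus ` (B \<inter> Gs n)"
    proof
      fix x assume x: "x \<in> uminus ` B \<inter> Gs n"
      then obtain b where b: "b \<in> B" "x = - b" by auto
      have "b \<in> Gs n" using sg_uminus[OF sgG, of x n] x b by simp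
      then show "x \<in> uminus ` (B \<inter> Gs n)" using b by blast
    qed
    show "uminus ` (B \<inter> Gs n) \<subseteq> uminus ` B \<inter> Gs n" using sg_uminus[OF sgG] by blast
  qed
  moreover have "card (uminus ` (B \<inter> Gs n)) = card (B \<inter> Gs n)"
    by (rule card_image) (auto simp: inj_on_def)
  ultimately show "ratio Gs (uminus ` B) n = ratio Gs B n" unfolding ratio_def by simp
qed

lemma ratio_nonneg: "0 \<le> ratio Gs X n" unfolding ratio_def by simp

lemma stab_fin_index:
  fixes A B :: "'a set"
  assumes neA: "A \<noteq> {}" and neB: "B \<noteq> {}"
    and hyp: "lower_density Gs (sumset A B) < lower_density Gs A + lower_density Gs B
       \<or> (upper_density Gs (sumset A B) < upper_density Gs A + upper_density Gs B
           \<and> (A = B \<or> A = uminus ` B))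
       \<or> upper_density Gs (sumset A B) < upper_density Gs A + lower_density Gs B"
  shows "finite (cosets (Stab (sumset A B)))"
proof -
  define S where "S = sumset A B"
  define H where "H = Stab S"
  define Sn where "Sn = (\<lambda>n. sumset (A \<inter> Gs n) (B \<inter> Gs n))"
  define L where "L = (\<lambda>n. Stab (Sn n))"
  obtain a0 b0 where a0: "a0 \<in> A" and b0: "b0 \<in> B" using neA neB by blast
  have evAB: "eventually (\<lambda>n. a0 \<in> Gs n \<and> b0 \<in> Gs n) sequentially"
    using eventually_conj[OF ev_mem ev_mem] .
  have props: "Sn n \<noteq> {} \<and> finite (Sn n) \<and> Sn n \<subseteq> S \<and> Sn n \<subseteq> Gs n \<and> L n \<subseteq> Gs n
      \<and> finite (L n) \<and> L n \<noteq> {}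
      \<and> card (A \<inter> Gs n) + card (B \<inter> Gs n) \<le> card (S \<inter> Gs n) + card (L n)"
    if n: "a0 \<in> Gs n \<and> b0 \<in> Gs n" for n
  proof -
    have neS: "Sn n \<noteq> {}" unfolding Sn_def sumset_def using n a0 b0 by blast
    have finS: "finite (Sn n)" unfolding Sn_def by (rule finite_sumset) (use fin in auto)
    have subS: "Sn n \<subseteq> S" unfolding Sn_def S_def sumset_def by blast
    have subG: "Sn n \<subseteq> Gs n" unfolding Sn_def sumset_def using sg_add[OF sgG] by blast
    have LG: "L n \<subseteq> Gs n"
    proof
      fix g assume g: "g \<in> L n"
      obtain s where s: "s \<in> Sn n" using neS by blast
      have "g + s \<in> Sn n" using Stab_mem g s unfolding L_def by blast
      then have "(g + s) - s \<in> Gs n" using sg_diff[OF sgG] subG s by blast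
      then show "g \<in> Gs n" by simp
    qed
    have finL: "finite (L n)" using finite_subset[OF LG fin] .
    have neL: "L n \<noteq> {}" using Stab_zero unfolding L_def by blast
    have "card (A \<inter> Gs n) + card (B \<inter> Gs n) \<le> card (Sn n) + card (L n)"
      unfolding L_def Sn_def by (rule kneser_weak) (use fin n a0 b0 in auto)
    moreover have "card (Sn n) \<le> card (S \<inter> Gs n)"
      by (rule card_mono) (use fin subS subG in auto)
    ultimately show ?thesis using neS finS subS subG LG finL neL by linarith
  qed
  have evineq: "eventually (\<lambda>n. ratio Gs A n + ratio Gs B n
      \<le> ereal (real (card (L n)) / real (card (Gs n))) + ratio Gs S n) sequentially"
    using evAB
  proof (rule eventually_mono)
    fix n assume n: "a0 \<in> Gs n \<and> b0 \<in> Gs n"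
    have k: "real (card (A \<inter> Gs n)) + real (card (B \<inter> Gs n)) \<le> real (card (L n)) + real (card (S \<inter> Gs n))"
      using props[OF n] by linarith
    have gp: "0 < real (card (Gs n))" using card_pos by simp
    have "real (card (A \<inter> Gs n)) / real (card (Gs n)) + real (card (B \<inter> Gs n)) / real (card (Gs n))
       \<le> real (card (L n)) / real (card (Gs n)) + real (card (S \<inter> Gs n)) / real (card (Gs n))"
      using divide_right_mono[OF k, of "real (card (Gs n))"] gp by (simp add: add_divide_distrib)
    then show "ratio Gs A n + ratio Gs B n
      \<le> ereal (real (card (L n)) / real (card (Gs n))) + ratio Gs S n"
      unfolding ratio_def by simp
  qed
  have freq: "\<exists>M. frequently (\<lambda>n. card (Gs n) \<le> M * card (L n)) sequentially"
  proof (rule ccontr)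
    assume nf: "\<not> ?thesis"
    have evM: "eventually (\<lambda>n. M * card (L n) < card (Gs n)) sequentially" for M
      using nf unfolding frequently_def by (simp add: not_le)
    define w where "w = (\<lambda>n. real (card (L n)) / real (card (Gs n)))"
    have "w \<longlonglongrightarrow> 0"
    proof (rule LIMSEQ_I)
      fix r :: real assume r: "0 < r"
      obtain M :: nat where M: "1 / r < real M" using reals_Archimedean2 by blast
      have Mp: "0 < real M" using M r by (smt (verit) divide_pos_pos)
      obtain N where N: "\<And>n. n \<ge> N \<Longrightarrow> M * card (L n) < card (Gs n)"
        using evM[of M] unfolding eventually_sequentially by blast
      have "norm (w n - 0) < r" if "n \<ge> N" for n
      proof -
        have "real M * real (card (L n)) < real (card (Gs n))" using N[OF that] by (metis of_nat_less_iff of_nat_mult)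
        moreover have gp: "0 < real (card (Gs n))" using card_pos by simp
        ultimately have "real M * w n < 1" unfolding w_def by (simp add: field_simps)
        moreover have "1 < r * real M" using M r by (simp add: field_simps)
        moreover have "0 \<le> w n" unfolding w_def by simp
        ultimately have "real M * w n < r * real M" by linarith
        then have "w n < r" using Mp by (simp add: mult.commute)
        then show ?thesis using \<open>0 \<le> w n\<close> by simp
      qed
      then show "\<exists>no. \<forall>n\<ge>no. norm (w n - 0) < r" by blast
    qed
    then have u: "(\<lambda>n. ereal (w n)) \<longlonglongrightarrow> 0" using tendsto_ereal[of w 0] by (simp add: zero_ereal_def)
    have ev': "eventually (\<lambda>n. ratio Gs A n + ratio Gs B n \<le> ereal (w n) + ratio Gs S n) sequentially"
      using evineq unfolding w_def .
    note di = density_ineqs[of "ratio Gs A" "ratio Gs B" "\<lambda>n. ereal (w n)" "ratio Gs S",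
        OF ratio_nonneg ratio_nonneg u ev']
    have eqAB: "ratio Gs A = ratio Gs B" if "A = B \<or> A = uminus ` B"
      using that ratio_uminus by auto
    show False using hyp di eqAB unfolding lower_density_def upper_density_def S_def[symmetric]
      by (meson not_less)
  qed
  then obtain M where M: "frequently (\<lambda>n. card (Gs n) \<le> M * card (L n)) sequentially" by blast
  have "finite (cosets H)"
  proof (rule finite_index[OF Stab_subgroup[of S, folded H_def]])
    fix F :: "'a set" assume fF: "finite F" and cF: "M < card F"
    show "\<exists>x\<in>F. \<exists>y\<in>F. x \<noteq> y \<and> x - y \<in> H"
    proof (rule ccontr)
      assume nk: "\<not> ?thesis"
      define P where "P = {p. fst p \<in> F \<and> snd p \<in> F \<and> fst p \<noteq> snd p}"
      have fP: "finite P"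
      proof -
        have "P \<subseteq> F \<times> F" unfolding P_def by auto
        then show ?thesis using fF finite_subset by blast
      qed
      have "\<forall>p\<in>P. \<exists>ab. fst ab \<in> A \<and> snd ab \<in> B \<and> (fst p - snd p) + (fst ab + snd ab) \<notin> S"
      proof
        fix p assume p: "p \<in> P"
        then have "fst p - snd p \<notin> Stab S" using nk unfolding P_def H_def by blast
        then obtain s where s: "s \<in> S" "(fst p - snd p) + s \<notin> S" unfolding Stab_def by blast
        then obtain a b where "a \<in> A" "b \<in> B" "s = a + b" unfolding S_def sumset_def by blast
        then show "\<exists>ab. fst ab \<in> A \<and> snd ab \<in> B \<and> (fst p - snd p) + (fst ab + snd ab) \<notin> S"
          using s by (intro exI[of _ "(a, b)"]) simp
      qed
      then obtain f where f: "\<forall>p\<in>P. fst (f p) \<in> A \<and> snd (f p) \<in> B \<and> (fst p - snd p) + (fst (f p) + snd (f p)) \<notin> S"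
        by (rule bchoice[elim_format]) blast
      define W where "W = F \<union> fst ` f ` P \<union> snd ` f ` P"
      have fW: "finite W" unfolding W_def using fF fP by simp
      have "frequently (\<lambda>n. card (Gs n) \<le> M * card (L n) \<and> (W \<subseteq> Gs n \<and> (a0 \<in> Gs n \<and> b0 \<in> Gs n))) sequentially"
        by (rule frequently_eventually_frequently[OF M eventually_conj[OF ev_sub[OF fW] evAB]])
      then obtain n where n: "card (Gs n) \<le> M * card (L n)" "W \<subseteq> Gs n" "a0 \<in> Gs n \<and> b0 \<in> Gs n"
        by (auto dest: frequently_ex)
      note pr = props[OF n(3)]
      have "\<exists>x\<in>F. \<exists>y\<in>F. x \<noteq> y \<and> (\<lambda>l. x + l) ` L n \<inter> (\<lambda>l. y + l) ` L n \<noteq> {}"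
      proof (rule pigeon[OF fin])
        show "\<forall>x\<in>F. (\<lambda>l. x + l) ` L n \<subseteq> Gs n"
          using n(2) pr sg_add[OF sgG] unfolding W_def by blast
      qed (use pr n fF cF in auto)
      then obtain x y l l' where xy: "x \<in> F" "y \<in> F" "x \<noteq> y" "l \<in> L n" "l' \<in> L n" "x + l = y + l'"
        by blast
      have "l' - l \<in> L n" unfolding L_def by (rule Stab_diff) (use pr xy in \<open>auto simp: L_def\<close>)
      moreover have "x - y = l' - l" using xy(6) by (simp add: algebra_simps)
      ultimately have xyL: "x - y \<in> L n" by simp
      have p: "(x, y) \<in> P" unfolding P_def using xy by simp
      have ab: "fst (f (x, y)) \<in> A \<inter> Gs n" "snd (f (x, y)) \<in> B \<inter> Gs n"
        using f p n(2) unfolding W_def by (auto intro!: subsetD[OF n(2)] simp: W_def)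
      have "fst (f (x, y)) + snd (f (x, y)) \<in> Sn n" unfolding Sn_def sumset_def using ab by blast
      then have "(x - y) + (fst (f (x, y)) + snd (f (x, y))) \<in> Sn n"
        using Stab_mem xyL unfolding L_def by blast
      then have "(x - y) + (fst (f (x, y)) + snd (f (x, y))) \<in> S" using pr by blast
      then show False using bspec[OF f p] by simp
    qed
  qed
  then show ?thesis unfolding H_def S_def .
qed

end


lemma coset_in: "(\<lambda>h. x + h) ` H \<in> cosets H" unfolding cosets_def by blast

lemma meet_Union_sup:
  assumes "is_subgroup H"
  shows "X \<subseteq> \<Union>{C \<in> cosets H. C \<inter> X \<noteq> {}}"
proof
  fix x assume x: "x \<in> X"
  have "x \<in> (\<lambda>h. x + h) ` H" by (rule coset_self[OF assms])
  then show "x \<in> \<Union>{C \<in> cosets H. C \<inter> X \<noteq> {}}" using coset_in[of x H] x by blast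
qed

lemma meet_Union_periodic:
  assumes "is_subgroup H" "\<And>h s. h \<in> H \<Longrightarrow> s \<in> X \<Longrightarrow> h + s \<in> X"
  shows "\<Union>{C \<in> cosets H. C \<inter> X \<noteq> {}} = X"
proof
  show "\<Union>{C \<in> cosets H. C \<inter> X \<noteq> {}} \<subseteq> X"
  proof
    fix y assume "y \<in> \<Union>{C \<in> cosets H. C \<inter> X \<noteq> {}}"
    then obtain C s where C: "C \<in> cosets H" "y \<in> C" "s \<in> C" "s \<in> X" by blast
    have "C = (\<lambda>h. s + h) ` H" by (rule coset_of_mem[OF assms(1) C(1,3)])
    then obtain h where "h \<in> H" "y = s + h" using C(2) by blast
    then show "y \<in> X" using assms(2)[of h s] C(4) by (simp add: add.commute)
  qed
  show "X \<subseteq> \<Union>{C \<in> cosets H. C \<inter> X \<noteq> {}}" by (rule meet_Union_sup[OF assms(1)])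
qed

context exh
begin

lemma stab_sub_G:
  assumes "T \<noteq> {}" "T \<subseteq> Gs n"
  shows "Stab T \<subseteq> Gs n"
proof
  fix g assume g: "g \<in> Stab T"
  obtain s where s: "s \<in> T" using assms(1) by blast
  have "g + s \<in> T" using Stab_mem g s by blast
  then have "(g + s) - s \<in> Gs n" using sg_diff[OF sgG] assms(2) s by blast
  then show "g \<in> Gs n" by simp
qed

lemma main_nonempty:
  fixes A B :: "'a set"
  assumes neA: "A \<noteq> {}" and neB: "B \<noteq> {}"
    and hyp: "lower_density Gs (sumset A B) < lower_density Gs A + lower_density Gs B
       \<or> (upper_density Gs (sumset A B) < upper_density Gs A + upper_density Gs B
           \<and> (A = B \<or> A = uminus ` B))
       \<or> upper_density Gs (sumset A B) < upper_density Gs A + lower_density Gs B"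
  shows "is_subgroup (Stab (sumset A B))
    \<and> finite (cosets (Stab (sumset A B)))
    \<and> lower_density Gs (Stab (sumset A B)) = ereal (1 / real (card (cosets (Stab (sumset A B)))))
    \<and> upper_density Gs (Stab (sumset A B)) = ereal (1 / real (card (cosets (Stab (sumset A B)))))
    \<and> cosets_meeting (Stab (sumset A B)) (sumset A B)
        = cosets_meeting (Stab (sumset A B)) A + cosets_meeting (Stab (sumset A B)) B - 1"
proof -
  define S where "S = sumset A B"
  define H where "H = Stab S"
  have sg: "is_subgroup H" unfolding H_def by (rule Stab_subgroup)
  have fc: "finite (cosets H)" unfolding H_def S_def by (rule stab_fin_index[OF neA neB hyp])
  define q where "q = card (cosets H)"
  have qpos: "0 < q" unfolding q_def using fc H_in_cosets[OF sg] card_gt_0_iff by blast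
  define D where "D = (\<lambda>X. {C \<in> cosets H. C \<inter> X \<noteq> {}})"
  have DH: "\<And>X. D X \<subseteq> cosets H" unfolding D_def by blast
  have cm: "\<And>X. cosets_meeting H X = card (D X)" unfolding D_def cosets_meeting_def by simp
  have evr: "eventually (\<lambda>n. \<forall>\<D>. \<D> \<subseteq> cosets H \<longrightarrow>
            ratio Gs (\<Union>\<D>) n = ereal (real (card \<D>) / real q)) sequentially"
    using ev_ratio[OF sg fc] unfolding q_def .
  have rH: "eventually (\<lambda>n. ratio Gs H n = ereal (1 / real q)) sequentially"
    using evr by (rule eventually_mono) (use H_in_cosets[OF sg] in \<open>auto dest: spec[of _ "{H}"]\<close>)
  note dH = density_of_ev[OF rH]
  have perS: "\<And>h s. h \<in> H \<Longrightarrow> s \<in> S \<Longrightarrow> h + s \<in> S" unfolding H_def using Stab_mem by blast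
  have US: "\<Union>(D S) = S" unfolding D_def by (rule meet_Union_periodic[OF sg perS])
  define a where "a = card (D A)"
  define b where "b = card (D B)"
  define c where "c = card (D S)"
  have rS: "eventually (\<lambda>n. ratio Gs S n = ereal (real c / real q)) sequentially"
    using evr
  proof (rule eventually_mono)
    fix n assume e: "\<forall>\<D>. \<D> \<subseteq> cosets H \<longrightarrow> ratio Gs (\<Union>\<D>) n = ereal (real (card \<D>) / real q)"
    show "ratio Gs S n = ereal (real c / real q)" using e[rule_format, OF DH[of S]] US unfolding c_def by simp
  qed
  note dS = density_of_ev[OF rS]
  have upX: "upper_density Gs X \<le> ereal (real (card (D X)) / real q)" for X
  proof -
    have "eventually (\<lambda>n. ratio Gs X n \<le> ereal (real (card (D X)) / real q)) sequentially"
      using evr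
    proof (rule eventually_mono)
      fix n assume e: "\<forall>\<D>. \<D> \<subseteq> cosets H \<longrightarrow> ratio Gs (\<Union>\<D>) n = ereal (real (card \<D>) / real q)"
      have "card (X \<inter> Gs n) \<le> card (\<Union>(D X) \<inter> Gs n)"
        by (rule card_mono) (use fin meet_Union_sup[OF sg, of X] in \<open>auto simp: D_def\<close>)
      then have "ratio Gs X n \<le> ratio Gs (\<Union>(D X)) n" unfolding ratio_def
        by (simp add: divide_right_mono)
      then show "ratio Gs X n \<le> ereal (real (card (D X)) / real q)" using e DH by auto
    qed
    then have "limsup (ratio Gs X) \<le> limsup (\<lambda>n. ereal (real (card (D X)) / real q))"
      by (rule Limsup_mono)
    then show ?thesis unfolding upper_density_def by (simp add: Limsup_const)
  qed
  have lu: "lower_density Gs X \<le> upper_density Gs X" for X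
    unfolding lower_density_def upper_density_def by (rule Liminf_le_Limsup) simp
  have "ereal (real c / real q) < ereal (real a / real q) + ereal (real b / real q)"
  proof -
    have uA: "upper_density Gs A \<le> ereal (real a / real q)" using upX[of A] unfolding a_def .
    have uB: "upper_density Gs B \<le> ereal (real b / real q)" using upX[of B] unfolding b_def .
    have lA: "lower_density Gs A \<le> ereal (real a / real q)" using lu[of A] uA by simp
    have lB: "lower_density Gs B \<le> ereal (real b / real q)" using lu[of B] uB by simp
    have s1: "lower_density Gs A + lower_density Gs B \<le> ereal (real a / real q) + ereal (real b / real q)"
      by (rule add_mono[OF lA lB])
    have s2: "upper_density Gs A + upper_density Gs B \<le> ereal (real a / real q) + ereal (real b / real q)"
      by (rule add_mono[OF uA uB])
    have s3: "upper_density Gs A + lower_density Gs B \<le> ereal (real a / real q) + ereal (real b / real q)"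
      by (rule add_mono[OF uA lB])
    have "lower_density Gs S < lower_density Gs A + lower_density Gs B
      \<or> upper_density Gs S < upper_density Gs A + upper_density Gs B
      \<or> upper_density Gs S < upper_density Gs A + lower_density Gs B"
      using hyp unfolding S_def by blast
    then show ?thesis
    proof (elim disjE)
      assume "lower_density Gs S < lower_density Gs A + lower_density Gs B"
      then show ?thesis using s1 dS(1) by (metis order_less_le_trans)
    next
      assume "upper_density Gs S < upper_density Gs A + upper_density Gs B"
      then show ?thesis using s2 dS(2) by (metis order_less_le_trans)
    next
      assume "upper_density Gs S < upper_density Gs A + lower_density Gs B"
      then show ?thesis using s3 dS(2) by (metis order_less_le_trans)
    qed
  qed
  then have "real c / real q < real a / real q + real b / real q" by simp
  then have "real c < real a + real b" using qpos by (simp add: add_divide_distrib[symmetric] divide_strict_right_mono_neg divide_less_cancel)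
  then have cab: "c < a + b" by linarith
  \<comment> \<open>lower bound on c via Kneser\<close>
  define pt where "pt = (\<lambda>X C :: 'a set. SOME x. x \<in> C \<inter> X)"
  have pt: "\<And>X C. C \<in> D X \<Longrightarrow> pt X C \<in> C \<inter> X"
  proof -
    fix X C assume "C \<in> D X"
    then have "\<exists>x. x \<in> C \<inter> X" unfolding D_def by blast
    then show "pt X C \<in> C \<inter> X" unfolding pt_def by (rule someI_ex)
  qed
  define R where "R = pt A ` D A \<union> pt B ` D B"
  have fR: "finite R" unfolding R_def using DH fc finite_subset by blast
  have "eventually (\<lambda>n. R \<subseteq> Gs n \<and> (\<forall>\<D>. \<D> \<subseteq> cosets H \<longrightarrow>
            card (\<Union>\<D> \<inter> Gs n) = card \<D> * card (H \<inter> Gs n))) sequentially"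
    using eventually_conj[OF ev_sub[OF fR] ev_count[OF sg fc]] .
  then obtain N where "\<forall>n\<ge>N. R \<subseteq> Gs n \<and> (\<forall>\<D>. \<D> \<subseteq> cosets H \<longrightarrow>
            card (\<Union>\<D> \<inter> Gs n) = card \<D> * card (H \<inter> Gs n))"
    unfolding eventually_sequentially by blast
  then have "R \<subseteq> Gs N \<and> (\<forall>\<D>. \<D> \<subseteq> cosets H \<longrightarrow>
            card (\<Union>\<D> \<inter> Gs N) = card \<D> * card (H \<inter> Gs N))" by blast
  then obtain n where n: "R \<subseteq> Gs n" "\<And>\<D>. \<D> \<subseteq> cosets H \<Longrightarrow> card (\<Union>\<D> \<inter> Gs n) = card \<D> * card (H \<inter> Gs n)"
    by blast
  define h where "h = card (H \<inter> Gs n)"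
  have hpos: "0 < h" unfolding h_def using sg_zero[OF sg] sg_zero[OF sgG, of n] fin[of n]
    by (metis IntI card_gt_0_iff empty_iff finite_Int)
  define A2 where "A2 = \<Union>(D A) \<inter> Gs n"
  define B2 where "B2 = \<Union>(D B) \<inter> Gs n"
  have cA2: "card A2 = a * h" unfolding A2_def a_def h_def using n(2)[OF DH] .
  have cB2: "card B2 = b * h" unfolding B2_def b_def h_def using n(2)[OF DH] .
  have cS: "card (S \<inter> Gs n) = c * h" unfolding c_def h_def using n(2)[OF DH, of S] US by simp
  have ptR: "\<And>X C. X = A \<or> X = B \<Longrightarrow> C \<in> D X \<Longrightarrow> pt X C \<in> Gs n \<and> pt X C \<in> \<Union>(D X) \<and> pt X C \<in> X"
    using pt n(1) unfolding R_def by blast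
  have neX: "\<And>X. X = A \<or> X = B \<Longrightarrow> \<Union>(D X) \<inter> Gs n \<noteq> {}"
  proof -
    fix X assume X: "X = A \<or> X = B"
    then obtain x where x: "x \<in> X" using neA neB by blast
    have "(\<lambda>h. x + h) ` H \<in> D X" unfolding D_def using coset_in[of x H] coset_self[OF sg, of x] x by blast
    then show "\<Union>(D X) \<inter> Gs n \<noteq> {}" using ptR[OF X] by blast
  qed
  have repr: "\<And>X y. y \<in> \<Union>(D X) \<Longrightarrow> \<exists>x\<in>X. y - x \<in> H"
  proof -
    fix X y assume "y \<in> \<Union>(D X)"
    then obtain C x where C: "C \<in> cosets H" "y \<in> C" "x \<in> C" "x \<in> X" unfolding D_def by blast
    have "C = (\<lambda>h. x + h) ` H" by (rule coset_of_mem[OF sg C(1,3)])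
    then show "\<exists>x\<in>X. y - x \<in> H" using C(2,4) coset_mem by blast
  qed
  define T where "T = sumset A2 B2"
  have finA2: "finite A2" "finite B2" unfolding A2_def B2_def using fin by auto
  have neT: "A2 \<noteq> {}" "B2 \<noteq> {}" unfolding A2_def B2_def using neX by auto
  have TS: "T \<subseteq> S \<inter> Gs n"
  proof
    fix t assume "t \<in> T"
    then obtain y y' where yy: "y \<in> A2" "y' \<in> B2" "t = y + y'" unfolding T_def sumset_def by blast
    obtain x where x: "x \<in> A" "y - x \<in> H" using repr yy(1) unfolding A2_def by blast
    obtain x' where x': "x' \<in> B" "y' - x' \<in> H" using repr yy(2) unfolding B2_def by blast
    have "(y - x) + (y' - x') \<in> H" by (rule sg_add[OF sg x(2) x'(2)])
    moreover have "x + x' \<in> S" unfolding S_def sumset_def using x x' by blast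
    ultimately have "((y - x) + (y' - x')) + (x + x') \<in> S" by (rule perS)
    moreover have "((y - x) + (y' - x')) + (x + x') = t" using yy by (simp add: algebra_simps)
    moreover have "t \<in> Gs n" using yy sg_add[OF sgG] unfolding A2_def B2_def by blast
    ultimately show "t \<in> S \<inter> Gs n" by simp
  qed
  have neTT: "T \<noteq> {}" unfolding T_def sumset_def using neT by blast
  have stT: "Stab T \<subseteq> H \<inter> Gs n"
  proof
    fix g assume g: "g \<in> Stab T"
    have gG: "g \<in> Gs n" using stab_sub_G[OF neTT] TS g by blast
    have "g \<in> H" unfolding H_def Stab_def
    proof (safe)
      fix s assume "s \<in> S"
      then obtain x x' where xx: "x \<in> A" "x' \<in> B" "s = x + x'" unfolding S_def sumset_def by blast
      define C where "C = (\<lambda>h. x + h) ` H"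
      define C' where "C' = (\<lambda>h. x' + h) ` H"
      have CD: "C \<in> D A" unfolding D_def C_def using coset_in[of x H] coset_self[OF sg, of x] xx by blast
      have CD': "C' \<in> D B" unfolding D_def C'_def using coset_in[of x' H] coset_self[OF sg, of x'] xx by blast
      define z where "z = pt A C"
      define z' where "z' = pt B C'"
      have z: "z \<in> Gs n" "z \<in> \<Union>(D A)" "z \<in> C" unfolding z_def using ptR[OF _ CD] pt[OF CD] by auto
      have z': "z' \<in> Gs n" "z' \<in> \<Union>(D B)" "z' \<in> C'" unfolding z'_def using ptR[OF _ CD'] pt[OF CD'] by auto
      have "z + z' \<in> T" unfolding T_def sumset_def A2_def B2_def using z z' by blast
      then have gz: "g + (z + z') \<in> T" using Stab_mem g by blast
      then have gzS: "g + (z + z') \<in> S" using TS by blast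
      have "z - x \<in> H" using z(3) coset_mem unfolding C_def by blast
      then have d1: "x - z \<in> H" using sg_uminus[OF sg] by (metis minus_diff_eq)
      have "z' - x' \<in> H" using z'(3) coset_mem unfolding C'_def by blast
      then have d2: "x' - z' \<in> H" using sg_uminus[OF sg] by (metis minus_diff_eq)
      have "(x - z) + (x' - z') \<in> H" by (rule sg_add[OF sg d1 d2])
      then have "((x - z) + (x' - z')) + (g + (z + z')) \<in> S" using perS gzS by blast
      moreover have "((x - z) + (x' - z')) + (g + (z + z')) = g + s" using xx by (simp add: algebra_simps)
      ultimately show "g + s \<in> S" by simp
    qed
    then show "g \<in> H \<inter> Gs n" using gG by blast
  qed
  have "card A2 + card B2 \<le> card T + card (Stab T)"
    unfolding T_def by (rule kneser_weak[OF finA2 neT])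
  moreover have "card T \<le> c * h"
  proof -
    have "finite (S \<inter> Gs n)" using fin by simp
    then show ?thesis using card_mono[OF _ TS] cS by simp
  qed
  moreover have "card (Stab T) \<le> h"
    unfolding h_def by (rule card_mono[OF _ stT]) (use fin in auto)
  ultimately have "a * h + b * h \<le> c * h + h" using cA2 cB2 by linarith
  then have "(a + b) * h \<le> (c + 1) * h" by (simp add: algebra_simps)
  then have "a + b \<le> c + 1" using hpos mult_le_cancel2 by blast
  then have ceq: "c = a + b - 1" using cab by linarith
  show ?thesis
    using sg fc dH ceq unfolding S_def[symmetric] H_def[symmetric] cm q_def a_def b_def c_def
    by simp
qed

end


lemma cosets_UNIV: "cosets (UNIV :: 'a::ab_group_add set) = {UNIV}"
proof -
  have "\<And>g::'a. (\<lambda>h. g + h) ` UNIV = UNIV" by (metis surj_plus)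
  then show ?thesis unfolding cosets_def by auto
qed

lemma cosets_meeting_UNIV: "cosets_meeting (UNIV :: 'a::ab_group_add set) X = (if X = {} then 0 else 1)"
proof -
  have "{C \<in> cosets (UNIV :: 'a set). C \<inter> X \<noteq> {}} = (if X = {} then {} else {UNIV})"
    unfolding cosets_UNIV by auto
  then show ?thesis unfolding cosets_meeting_def by simp
qed

theorem theorem1p1:
  fixes Gs :: "nat \<Rightarrow> 'a::ab_group_add set" and A B :: "'a set"
  assumes "infinite (UNIV :: 'a set)"
    and "exhausting_seq Gs"
    and "lower_density Gs (sumset A B) < lower_density Gs A + lower_density Gs B
       \<or> (upper_density Gs (sumset A B) < upper_density Gs A + upper_density Gs B
           \<and> (A = B \<or> A = uminus ` B))
       \<or> upper_density Gs (sumset A B) < upper_density Gs A + lower_density Gs B"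
  shows "is_subgroup (Stab (sumset A B))
    \<and> finite (cosets (Stab (sumset A B)))
    \<and> lower_density Gs (Stab (sumset A B)) = ereal (1 / real (card (cosets (Stab (sumset A B)))))
    \<and> upper_density Gs (Stab (sumset A B)) = ereal (1 / real (card (cosets (Stab (sumset A B)))))
    \<and> cosets_meeting (Stab (sumset A B)) (sumset A B)
        = cosets_meeting (Stab (sumset A B)) A + cosets_meeting (Stab (sumset A B)) B - 1"
proof -
  interpret exh Gs by unfold_locales (rule assms(2))
  show ?thesis
  proof (cases "A = {} \<or> B = {}")
    case False
    then show ?thesis using main_nonempty[OF _ _ assms(3)] by blast
  next
    case True
    then have S: "sumset A B = {}" unfolding sumset_def by blast
    have St: "Stab (sumset A B) = UNIV" unfolding S Stab_def by simp
    have r: "eventually (\<lambda>n. ratio Gs UNIV n = ereal 1) sequentially"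
      using card_pos by (auto simp: ratio_def)
    note d = density_of_ev[OF r]
    have sgU: "is_subgroup (UNIV :: 'a set)" unfolding is_subgroup_def by simp
    show ?thesis unfolding St using d sgU True
      by (auto simp: cosets_UNIV cosets_meeting_UNIV S)
  qed
qed

end
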